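(* Let $A=\{i_1,\dots,i_a\}\subseteq\{1,\dots,d\}$ be an ordered subset, let $\alpha\in\mathbb{Z}_2^a$ be even (i.e. $\alpha_1+\dots+\alpha_a$ is even), and let $r\geq 0$. Then the X-cycle $$A^{(r,\alpha)} := h_r^\alpha(A)\,\sigma_A\,c_\alpha(A)$$ lies in $\mathcal{C}_X=\operatorname{Cent}_{\operatorname{gr}\mathcal{S}^f_d}(x_1,\dots,x_d)$, i.e. it commutes with every polynomial generator $x_1,\dots,x_d$ of $\operatorname{gr}\mathcal{S}^f_d$.
   Context: Fix $l,d\geq 1$ and a commutative ring $R$. $\operatorname{gr}\mathcal{S}^f_d$ is the associated graded superalgebra of the cyclotomic Sergeev superalgebra $\mathcal{S}^f_d$ (the quotient of the affine Sergeev superalgebra by the two-sided ideal generated by $f(\hat x_1)$, $f$ monic of degree $l$ with terms all of the same parity), filtered by putting polynomial generators in degree $1$ and Coxeter and Clifford generators in degree $0$. By the PBW theorem, $\operatorname{gr}\mathcal{S}^f_d\cong (R[x_1,\dots,x_d]/(x_1^l,\dots,x_d^l)\,\hat\otimes\, R\Sigma_d)\otimes C_d$, where $C_d$ is the Clifford superalgebra on odd generators $c_1,\dots,c_d$ with $c_i^2=1$, $c_ic_j=-c_jc_i$ ($i\neq j$); in it $x_ic_i=-c_ix_i$, $x_ic_j=c_jx_i$ ($i\ne j$), and permutations act on the indices of $x$'s and $c$'s by conjugation. For $A=\{i_1,\dots,i_a\}$, $\sigma_A$ is the cycle $(i_1\ \dots\ i_a)\in\Sigma_d$, and $c_\alpha(A)=c_{i_1}^{\alpha_1}\cdots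 c_{i_a}^{\alpha_a}$. For $\alpha\in\mathbb{Z}_2^a$ define signs $\epsilon^\alpha_i=\prod_{j<i}(-1)^{\alpha_j}$ ($\epsilon^\alpha_1=1$), and for even $\alpha$ and $r\ge 0$ define $$h_r^\alpha(A)=\sum_{r_1+\dots+r_a=(a-1)(l-1)+r}(\epsilon^\alpha_1x_{i_1})^{r_1}\cdots(\epsilon^\alpha_a x_{i_a})^{r_a}.$$ The proof uses the identity $x_{i_j}h^\alpha_r(A)=(-1)^{\alpha_j}h^\alpha_r(A)x_{\sigma_A(i_j)}$ for $j=1,\dots,a$. *)

theory Defs
  imports "HOL-Combinatorics.Permutations"
begin

text \<open>The associated graded superalgebra gr S^f_d is presented (PBW theorem) by even generators
x_1..x_d, the group Sigma_d, and odd Clifford generators c_1..c_d subject to the relations below.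
We state the theorem for every ring (over any coefficient ring, integers acting centrally)
containing elements satisfying these defining relations; this covers gr S^f_d itself.\<close>

definition gr_sergeev_rel ::
  "nat \<Rightarrow> nat \<Rightarrow> (nat \<Rightarrow> 'a::ring_1) \<Rightarrow> ((nat \<Rightarrow> nat) \<Rightarrow> 'a) \<Rightarrow> (nat \<Rightarrow> 'a) \<Rightarrow> bool" where
  "gr_sergeev_rel l d x s c \<longleftrightarrow>
     (\<forall>i\<in>{1..d}. \<forall>j\<in>{1..d}. x i * x j = x j * x i) \<and>
     (\<forall>i\<in>{1..d}. x i ^ l = 0) \<and>
     s id = 1 \<and>
     (\<forall>p q. p permutes {1..d} \<longrightarrow> q permutes {1..d} \<longrightarrow> s (p \<circ> q) = s p * s q) \<and>
     (\<forall>p. p permutes {1..d} \<longrightarrow> (\<forall>i\<in>{1..d}. s p * x i = x (p i) * s p)) \<and>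
     (\<forall>p. p permutes {1..d} \<longrightarrow> (\<forall>i\<in>{1..d}. s p * c i = c (p i) * s p)) \<and>
     (\<forall>i\<in>{1..d}. c i * c i = 1) \<and>
     (\<forall>i\<in>{1..d}. \<forall>j\<in>{1..d}. i \<noteq> j \<longrightarrow> c i * c j = - (c j * c i)) \<and>
     (\<forall>i\<in>{1..d}. x i * c i = - (c i * x i)) \<and>
     (\<forall>i\<in>{1..d}. \<forall>j\<in>{1..d}. i \<noteq> j \<longrightarrow> x i * c j = c j * x i)"

definition list_cycle :: "nat list \<Rightarrow> nat \<Rightarrow> nat" where
  "list_cycle A k = (if k \<in> set A
     then A ! (((THE j. j < length A \<and> A ! j = k) + 1) mod length A) else k)"

definition c_alpha :: "(nat \<Rightarrow> 'a::ring_1) \<Rightarrow> bool list \<Rightarrow> nat list \<Rightarrow> 'a" where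
  "c_alpha c \<alpha> A = prod_list (map (\<lambda>j. if \<alpha> ! j then c (A ! j) else 1) [0..<length A])"

text \<open>epsilon^alpha_i = prod_{j<i} (-1)^{alpha_j}, with 0-based index i.\<close>
definition eps_sign :: "bool list \<Rightarrow> nat \<Rightarrow> int" where
  "eps_sign \<alpha> i = (\<Prod>j<i. if \<alpha> ! j then -1 else 1)"

definition alpha_even :: "bool list \<Rightarrow> bool" where
  "alpha_even \<alpha> \<longleftrightarrow> even (length (filter id \<alpha>))"

definition h_alpha :: "nat \<Rightarrow> (nat \<Rightarrow> 'a::ring_1) \<Rightarrow> nat \<Rightarrow> bool list \<Rightarrow> nat list \<Rightarrow> 'a" where
  "h_alpha l x r \<alpha> A =
     (\<Sum>rs\<in>{rs. length rs = length A \<and> sum_list rs = (length A - 1) * (l - 1) + r}.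
        prod_list (map (\<lambda>j. (of_int (eps_sign \<alpha> j) * x (A ! j)) ^ (rs ! j)) [0..<length A]))"

definition X_cycle :: "nat \<Rightarrow> (nat \<Rightarrow> 'a::ring_1) \<Rightarrow> ((nat \<Rightarrow> nat) \<Rightarrow> 'a) \<Rightarrow> (nat \<Rightarrow> 'a)
    \<Rightarrow> nat \<Rightarrow> bool list \<Rightarrow> nat list \<Rightarrow> 'a" where
  "X_cycle l x s c r \<alpha> A = h_alpha l x r \<alpha> A * s (list_cycle A) * c_alpha c \<alpha> A"

end

theory Submission
  imports Defs
begin

lemma prod_list_comm:
  fixes z :: "'a::ring_1"
  assumes "\<forall>u\<in>set us. z * u = u * z"
  shows "z * prod_list us = prod_list us * z"
  using assms by (induction us) (simp_all, metis mult.assoc)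

lemma prod_list_zero: "(0::'a::semiring_1) \<in> set us \<Longrightarrow> prod_list us = 0"
  by (induction us) auto

lemma prod_list_update_mult:
  fixes z :: "'a::ring_1"
  assumes "distinct xs" "k \<in> set xs" "g k = z * f k" "\<forall>j\<in>set xs. j\<noteq>k \<longrightarrow> g j = f j"
    "\<forall>j\<in>set xs. z * f j = f j * z"
  shows "z * prod_list (map f xs) = prod_list (map g xs)"
  using assms
proof (induction xs)
  case Nil then show ?case by simp
next
  case (Cons j ys)
  show ?case
  proof (cases "j = k")
    case True
    then have "k \<notin> set ys" using Cons.prems by auto
    then have "map g ys = map f ys" using Cons.prems by (auto intro!: map_cong)
    then show ?thesis using True Cons.prems(3)
      by (simp only: list.map prod_list.Cons mult.assoc)
  next
    case False
    then have "z * prod_list (map f ys) = prod_list (map g ys)" using Cons by auto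
    then show ?thesis using False Cons.prems by (simp, metis mult.assoc)
  qed
qed

lemma prod_list_sign_comm:
  fixes z :: "'a::ring_1"
  assumes "distinct xs" "k \<in> set xs" "z * f k = of_int e * f k * z"
    "\<forall>j\<in>set xs. j\<noteq>k \<longrightarrow> z * f j = f j * z"
  shows "z * prod_list (map f xs) = of_int e * prod_list (map f xs) * z"
  using assms
proof (induction xs)
  case Nil then show ?case by simp
next
  case (Cons j ys)
  show ?case
  proof (cases "j = k")
    case True
    then have "k \<notin> set ys" using Cons.prems by auto
    then have "z * prod_list (map f ys) = prod_list (map f ys) * z"
      using Cons.prems by (intro prod_list_comm) auto
    then show ?thesis using True Cons.prems by (simp add: mult.assoc) (metis mult.assoc)
  next
    case False
    then have "z * prod_list (map f ys) = of_int e * prod_list (map f ys) * z" using Cons by auto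
    then show ?thesis using False Cons.prems
      by (simp add: mult.assoc) (metis mult.assoc mult_of_int_commute)
  qed
qed

lemma sum_list_bump:
  fixes t :: "nat list"
  assumes "k < length t" shows "sum_list (t[k := Suc (t!k)]) = Suc (sum_list t)"
  using sum_list_update[OF assms, of "t!k+1"] by simp

lemma key:
  fixes y :: "nat \<Rightarrow> 'a::ring_1"
  assumes comm: "\<forall>i<a. \<forall>j<a. y i * y j = y j * y i" and nil: "\<forall>i<a. y i ^ l = 0"
    and l: "l \<ge> 1" and k: "k < a"
  shows "y k * (\<Sum>t\<in>{t. length t = a \<and> sum_list t = (a-1)*(l-1)+r}. prod_list (map (\<lambda>j. y j ^ (t!j)) [0..<a]))
       = (\<Sum>t\<in>{t. length t = a \<and> sum_list t = Suc ((a-1)*(l-1)+r)}. prod_list (map (\<lambda>j. y j ^ (t!j)) [0..<a]))"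
proof -
  define M where "M t = prod_list (map (\<lambda>j. y j ^ (t!j)) [0..<a])" for t
  define N where "N = (a-1)*(l-1)+r"
  define S where "S n = {t::nat list. length t = a \<and> sum_list t = n}" for n
  have fin: "finite (S n)" for n
  proof -
    have "S n \<subseteq> {t. set t \<subseteq> {0..n} \<and> length t = a}"
      using member_le_sum_list by (fastforce simp: S_def)
    then show ?thesis by (rule finite_subset) (rule finite_lists_length_eq, simp)
  qed
  define up where "up t = t[k := t!k + 1]" for t :: "nat list"
  have Mup: "y k * M t = M (up t)" if "t \<in> S N" for t
    unfolding M_def
  proof (rule prod_list_update_mult)
    show "y k ^ (up t ! k) = y k * y k ^ (t ! k)" using that k by (simp add: up_def S_def)
    show "\<forall>j\<in>set [0..<a]. j \<noteq> k \<longrightarrow> y j ^ (up t ! j) = y j ^ (t ! j)"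
      by (simp add: up_def)
    show "\<forall>j\<in>set [0..<a]. y k * y j ^ (t ! j) = y j ^ (t ! j) * y k"
      using comm k by (metis atLeastLessThan_iff power_commuting_commutes set_upt)
  qed (use k in auto)
  have s1: "y k * sum M (S N) = sum (M \<circ> up) (S N)"
    by (simp add: sum_distrib_left Mup)
  have inj: "inj_on up (S N)"
  proof
    fix t u assume t: "t \<in> S N" and u: "u \<in> S N" and e: "up t = up u"
    show "t = u"
    proof (rule nth_equalityI)
      show "length t = length u" using t u by (simp add: S_def)
      fix i assume "i < length t"
      have "up t ! i = up u ! i" using e by simp
      then show "t ! i = u ! i" using t u k
        by (cases "i = k") (auto simp: up_def S_def)
    qed
  qed
  have img: "up ` S N = {t \<in> S (Suc N). t!k \<ge> 1}"
  proof
    show "up ` S N \<subseteq> {t \<in> S (Suc N). t!k \<ge> 1}"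
      using k by (auto simp: up_def S_def sum_list_bump)
    show "{t \<in> S (Suc N). t!k \<ge> 1} \<subseteq> up ` S N"
    proof
      fix t assume t: "t \<in> {t \<in> S (Suc N). t!k \<ge> 1}"
      define u where "u = t[k := t!k - 1]"
      have lu: "length u = a" using t by (simp add: u_def S_def)
      have "up u = t" using t k by (auto simp: up_def u_def S_def)
      moreover have "sum_list u = N"
        using sum_list_bump[of k u] t k lu \<open>up u = t\<close> by (simp add: up_def S_def)
      ultimately show "t \<in> up ` S N" using lu by (auto simp: S_def)
    qed
  qed
  have zero: "M t = 0" if t: "t \<in> S (Suc N) - {t \<in> S (Suc N). t!k \<ge> 1}" for t
  proof -
    have tk: "t!k = 0" and lt: "length t = a" and st: "sum_list t = Suc N"
      using t by (auto simp: S_def)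
    have "\<exists>j<a. t!j \<ge> l"
    proof (rule ccontr)
      assume "\<not> ?thesis"
      then have b: "\<forall>j<a. t!j \<le> l - 1" by auto
      have "sum_list t = (\<Sum>i\<in>{..<a}. t!i)"
        using lt by (simp add: sum_list_sum_nth atLeast0LessThan)
      also have "\<dots> = t!k + (\<Sum>i\<in>{..<a}-{k}. t!i)"
        using k by (simp add: sum.remove)
      also have "\<dots> \<le> 0 + card ({..<a}-{k}) * (l-1)"
        proof -
        have "(\<Sum>i\<in>{..<a}-{k}. t!i) \<le> of_nat (card ({..<a}-{k})) * (l-1)"
          by (rule sum_bounded_above) (use b in auto)
        then show ?thesis using tk by simp
      qed
      also have "\<dots> = (a-1)*(l-1)" using k by simp
      finally have "sum_list t \<le> (a-1)*(l-1)" .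
      then show False using st unfolding N_def by linarith
    qed
    then obtain j where j: "j < a" "t!j \<ge> l" by auto
    have "y j ^ (t!j) = y j ^ l * y j ^ (t!j - l)"
      using j by (simp flip: power_add)
    then have "y j ^ (t!j) = 0" using nil j by simp
    moreover have "j \<in> set [0..<a]" using j by simp
    ultimately have "0 \<in> set (map (\<lambda>j. y j ^ (t!j)) [0..<a])"
      by (simp only: set_map) (rule image_eqI[where x=j], simp_all)
    then show ?thesis unfolding M_def by (rule prod_list_zero)
  qed
  have "y k * sum M (S N) = sum M (up ` S N)"
    using s1 sum.reindex[OF inj, of M] by simp
  also have "\<dots> = sum M (S (Suc N))"
    unfolding img by (rule sum.mono_neutral_left[OF fin]) (auto intro: zero)
  finally show ?thesis unfolding M_def S_def N_def .
qed

lemma ofint_mult_mult: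
  fixes z1 z2 :: "'a::ring_1"
  shows "(of_int e1 * z1) * (of_int e2 * z2) = of_int (e1*e2) * (z1*z2)"
proof -
  have "(of_int e1 * z1) * (of_int e2 * z2) = of_int e1 * ((z1 * of_int e2) * z2)" by (simp only: mult.assoc)
  also have "\<dots> = of_int e1 * ((of_int e2 * z1) * z2)" by (subst mult_of_int_commute[of e2 z1]) (rule refl)
  also have "\<dots> = of_int (e1*e2) * (z1*z2)" by (simp only: of_int_mult mult.assoc)
  finally show ?thesis .
qed

lemma xcommy:
  fixes z w :: "'a::ring_1"
  assumes "z * w = w * z" shows "z * (of_int e * w) = (of_int e * w) * z"
proof -
  have "z * (of_int e * w) = (z * of_int e) * w" by (simp only: mult.assoc)
  also have "\<dots> = of_int e * (z * w)" by (subst mult_of_int_commute[of e z, symmetric]) (simp only: mult.assoc)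
  also have "\<dots> = (of_int e * w) * z" using assms by (simp only: mult.assoc)
  finally show ?thesis .
qed

lemma power_of_int_mult:
  fixes z :: "'a::ring_1"
  shows "(of_int e * z) ^ n = of_int (e ^ n) * z ^ n"
proof (induction n)
  case 0 then show ?case by simp
next
  case (Suc n)
  have "(of_int e * z) ^ Suc n = (of_int e * z) * (of_int (e ^ n) * z ^ n)"
    using Suc by simp
  also have "\<dots> = of_int (e * e^n) * (z * z^n)" by (rule ofint_mult_mult)
  finally show ?case by simp
qed

lemma eps_sq: "eps_sign \<alpha> i * eps_sign \<alpha> i = 1"
proof -
  have "eps_sign \<alpha> i * eps_sign \<alpha> i = (\<Prod>j<i. (if \<alpha>!j then -1 else 1) * (if \<alpha>!j then -1 else (1::int)))"
    unfolding eps_sign_def by (rule prod.distrib[symmetric])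
  also have "\<dots> = (\<Prod>j<i. 1)" by (rule prod.cong) auto
  finally show ?thesis by simp
qed

lemma eps_Suc: "eps_sign \<alpha> (Suc i) = eps_sign \<alpha> i * (if \<alpha>!i then -1 else 1)"
  by (simp add: eps_sign_def)

lemma eps_full: assumes "alpha_even \<alpha>" shows "eps_sign \<alpha> (length \<alpha>) = 1"
proof -
  have "eps_sign \<alpha> (length \<alpha>) = (\<Prod>j\<in>{..<length \<alpha>} \<inter> {j. \<alpha>!j}. -1) * (\<Prod>j\<in>{..<length \<alpha>} \<inter> - {j. \<alpha>!j}. 1)"
    unfolding eps_sign_def by (rule prod.If_cases) simp
  also have "\<dots> = (-1) ^ card {i. i < length \<alpha> \<and> id (\<alpha>!i)}"
    by (simp add: Int_def conj_commute)
  also have "\<dots> = (-1) ^ length (filter id \<alpha>)" by (simp add: length_filter_conv_card)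
  finally show ?thesis using assms by (simp add: alpha_even_def)
qed

lemma list_cycle_nth:
  assumes "distinct A" "i < length A"
  shows "list_cycle A (A!i) = A ! (Suc i mod length A)"
proof -
  have "(THE j. j < length A \<and> A ! j = A ! i) = i"
    using assms by (auto intro!: the_equality simp: nth_eq_iff_index_eq)
  then show ?thesis using assms by (simp add: list_cycle_def)
qed

lemma suc_mod_inj: "i < (a::nat) \<Longrightarrow> j < a \<Longrightarrow> Suc i mod a = Suc j mod a \<Longrightarrow> i = j"
  by (auto simp: mod_Suc split: if_splits)

lemma list_cycle_permutes:
  assumes "distinct A" "A \<noteq> []"
  shows "list_cycle A permutes set A"
proof (rule bij_imp_permutes)
  show "list_cycle A x = x" if "x \<notin> set A" for x using that by (simp add: list_cycle_def)
  have sub: "list_cycle A ` set A \<subseteq> set A"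
  proof
    fix y assume "y \<in> list_cycle A ` set A"
    then obtain i where "i < length A" "y = list_cycle A (A!i)" by (auto simp: in_set_conv_nth)
    then show "y \<in> set A" using assms by (simp add: list_cycle_nth)
  qed
  have inj: "inj_on (list_cycle A) (set A)"
  proof
    fix u v assume "u \<in> set A" "v \<in> set A" and e: "list_cycle A u = list_cycle A v"
    then obtain i j where ij: "i < length A" "j < length A" "u = A!i" "v = A!j"
      by (auto simp: in_set_conv_nth)
    then have "A ! (Suc i mod length A) = A ! (Suc j mod length A)"
      using e assms by (simp add: list_cycle_nth)
    then have "Suc i mod length A = Suc j mod length A"
      using assms ij by (simp add: nth_eq_iff_index_eq)
    then show "u = v" using ij suc_mod_inj by metis
  qed
  show "bij_betw (list_cycle A) (set A) (set A)"
    unfolding bij_betw_def using inj endo_inj_surj[OF _ sub inj] by simp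
qed

theorem mainTheorem8:
  fixes l d r :: nat and x :: "nat \<Rightarrow> 'a::ring_1" and s :: "(nat \<Rightarrow> nat) \<Rightarrow> 'a"
    and c :: "nat \<Rightarrow> 'a" and A :: "nat list" and \<alpha> :: "bool list"
  assumes "l \<ge> 1" and "d \<ge> 1"
    and "gr_sergeev_rel l d x s c"
    and "A \<noteq> []" and "distinct A" and "set A \<subseteq> {1..d}"
    and "length \<alpha> = length A" and "alpha_even \<alpha>"
  shows "\<forall>j\<in>{1..d}. x j * X_cycle l x s c r \<alpha> A = X_cycle l x s c r \<alpha> A * x j"
proof
  fix j assume jd: "j \<in> {1..d}"
  note rel = assms(3)[unfolded gr_sergeev_rel_def]
  have R1: "\<forall>i\<in>{1..d}. \<forall>j\<in>{1..d}. x i * x j = x j * x i" using rel[THEN conjunct1] .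
  have R2: "\<forall>i\<in>{1..d}. x i ^ l = 0" using rel[THEN conjunct2, THEN conjunct1] .
  have R5: "\<forall>p. p permutes {1..d} \<longrightarrow> (\<forall>i\<in>{1..d}. s p * x i = x (p i) * s p)"
    using rel[THEN conjunct2, THEN conjunct2, THEN conjunct2, THEN conjunct2, THEN conjunct1] .
  have R9: "\<forall>i\<in>{1..d}. x i * c i = - (c i * x i)"
    using rel[THEN conjunct2, THEN conjunct2, THEN conjunct2, THEN conjunct2, THEN conjunct2,
      THEN conjunct2, THEN conjunct2, THEN conjunct2, THEN conjunct1] .
  have R10: "\<forall>i\<in>{1..d}. \<forall>j\<in>{1..d}. i \<noteq> j \<longrightarrow> x i * c j = c j * x i"
    using rel[THEN conjunct2, THEN conjunct2, THEN conjunct2, THEN conjunct2, THEN conjunct2,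
      THEN conjunct2, THEN conjunct2, THEN conjunct2, THEN conjunct2] .
  have xx: "\<And>i j. i \<in> {1..d} \<Longrightarrow> j \<in> {1..d} \<Longrightarrow> x i * x j = x j * x i" using R1 by blast
  have xl: "\<And>i. i \<in> {1..d} \<Longrightarrow> x i ^ l = 0" using R2 by blast
  have sx: "\<And>p i. p permutes {1..d} \<Longrightarrow> i \<in> {1..d} \<Longrightarrow> s p * x i = x (p i) * s p" using R5 by blast
  have xcs: "\<And>i. i \<in> {1..d} \<Longrightarrow> x i * c i = - (c i * x i)" using R9 by blast
  have xco: "\<And>i j. i \<in> {1..d} \<Longrightarrow> j \<in> {1..d} \<Longrightarrow> i \<noteq> j \<Longrightarrow> x i * c j = c j * x i" using R10 by blast
  define a where "a = length A"
  have a0: "a > 0" using assms(4) by (simp add: a_def)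
  have Ad: "\<And>i. i < a \<Longrightarrow> A!i \<in> {1..d}" using assms(6) a_def nth_mem by blast
  define \<sigma> where "\<sigma> = list_cycle A"
  have perm: "\<sigma> permutes {1..d}"
    unfolding \<sigma>_def using list_cycle_permutes[OF assms(5,4)] assms(6) permutes_subset by blast
  define y where "y i = of_int (eps_sign \<alpha> i) * x (A!i)" for i
  define H where "H = h_alpha l x r \<alpha> A"
  define S where "S = s \<sigma>"
  define C where "C = c_alpha c \<alpha> A"
  define f where "f = (\<lambda>i. if \<alpha> ! i then c (A ! i) else 1)"
  have Cf: "C = prod_list (map f [0..<a])" by (simp add: C_def c_alpha_def f_def a_def)
  have X: "X_cycle l x s c r \<alpha> A = H * S * C" by (simp add: X_cycle_def H_def S_def C_def \<sigma>_def)
  have Hy: "H = (\<Sum>t\<in>{t. length t = a \<and> sum_list t = (a-1)*(l-1)+r}. prod_list (map (\<lambda>j. y j ^ (t!j)) [0..<a]))"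
    by (simp add: H_def h_alpha_def y_def a_def)
  have ycomm: "\<forall>i<a. \<forall>j<a. y i * y j = y j * y i"
    using Ad xx by (simp add: y_def ofint_mult_mult mult.commute)
  have ynil: "\<forall>i<a. y i ^ l = 0"
    using Ad xl by (simp add: y_def power_of_int_mult)
  have yH: "y k * H = y k' * H" if "k < a" "k' < a" for k k'
    unfolding Hy using key[OF ycomm ynil assms(1) that(1)] key[OF ycomm ynil assms(1) that(2)] by simp
  have xH: "x i * H = H * x i" if "i \<in> {1..d}" for i
  proof -
    have xy: "x i * y m ^ n = y m ^ n * x i" if "m < a" for m n
      using power_commuting_commutes[of "y m" "x i" n] xcommy[of "x i" "x (A!m)" "eps_sign \<alpha> m"]
        xx[OF \<open>i \<in> {1..d}\<close> Ad[OF that]] by (simp add: y_def)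
    have "x i * prod_list (map (\<lambda>j. y j ^ (t!j)) [0..<a]) = prod_list (map (\<lambda>j. y j ^ (t!j)) [0..<a]) * x i" for t
      by (rule prod_list_comm) (auto simp: xy)
    then show ?thesis unfolding Hy by (simp add: sum_distrib_left sum_distrib_right)
  qed
  show "x j * X_cycle l x s c r \<alpha> A = X_cycle l x s c r \<alpha> A * x j"
  proof (cases "j \<in> set A")
    case False
    have e1: "x j * H = H * x j" using xH jd .
    have "\<sigma> j = j" using False by (simp add: \<sigma>_def list_cycle_def)
    then have e2: "x j * S = S * x j" using sx[OF perm jd] by (simp add: S_def)
    have "x j * f i = f i * x j" if "i < a" for i
    proof -
      have "A!i \<noteq> j" using False that a_def nth_mem by metis
      then show ?thesis using xco[OF jd Ad[OF that]] by (simp add: f_def)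
    qed
    then have e3: "x j * C = C * x j" unfolding Cf by (intro prod_list_comm) auto
    have "x j * (H*S*C) = (x j * H) * S * C" by (simp only: mult.assoc)
    also have "\<dots> = H * (x j * S) * C" by (simp only: e1 mult.assoc)
    also have "\<dots> = H * S * (x j * C)" by (simp only: e2 mult.assoc)
    also have "\<dots> = H * S * C * x j" by (simp only: e3 mult.assoc)
    finally show ?thesis using X by simp
  next
    case True
    then obtain k where k: "k < a" "j = A!k" by (auto simp: a_def in_set_conv_nth)
    define k' where "k' = Suc k mod a"
    have k': "k' < a" using a0 by (simp add: k'_def)
    define sg :: int where "sg = (if \<alpha>!k then -1 else 1)"
    define e :: 'a where "e = of_int sg"
    have ee: "e * e = 1" by (simp add: e_def sg_def flip: of_int_mult)
    have eps_rel: "eps_sign \<alpha> k * eps_sign \<alpha> k' = sg"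
    proof (cases "Suc k < a")
      case True
      then have "k' = Suc k" by (simp add: k'_def)
      then show ?thesis using eps_sq[of \<alpha> k] by (simp add: eps_Suc sg_def mult.assoc[symmetric])
    next
      case False
      then have sk: "Suc k = a" using k by simp
      then have "k' = 0" "Suc k = length \<alpha>" using assms(7) by (simp_all add: k'_def a_def)
      then have "eps_sign \<alpha> k * sg = 1" using eps_full[OF assms(8)] eps_Suc[of \<alpha> k]
        by (simp add: sg_def)
      moreover have "eps_sign \<alpha> k' = 1" using \<open>k' = 0\<close> by (simp add: eps_sign_def)
      ultimately show ?thesis by (auto simp: sg_def split: if_splits)
    qed
    have step1: "x j * H = e * (H * x (A!k'))"
    proof -
      have "of_int (eps_sign \<alpha> k) * x j * H = of_int (eps_sign \<alpha> k') * x (A!k') * H"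
        using yH[OF k(1) k'] k by (simp add: y_def)
      then have "of_int (eps_sign \<alpha> k) * (of_int (eps_sign \<alpha> k) * x j * H)
          = of_int (eps_sign \<alpha> k) * (of_int (eps_sign \<alpha> k') * x (A!k') * H)" by simp
      then have "of_int (eps_sign \<alpha> k * eps_sign \<alpha> k) * x j * H
          = of_int (eps_sign \<alpha> k * eps_sign \<alpha> k') * x (A!k') * H" by (simp add: mult.assoc)
      then have "x j * H = e * (x (A!k') * H)" by (simp add: eps_sq eps_rel e_def mult.assoc)
      then show ?thesis using xH[OF Ad[OF k']] by simp
    qed
    have "\<sigma> j = A!k'" using list_cycle_nth[OF assms(5)] k by (simp add: \<sigma>_def k'_def a_def)
    then have step2: "x (A!k') * S = S * x j" using sx[OF perm jd] by (simp add: S_def)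
    have step3: "x j * C = e * C * x j"
      unfolding Cf e_def
    proof (rule prod_list_sign_comm)
      show "distinct [0..<a]" by simp
      show "k \<in> set [0..<a]" using k by simp
      show "x j * f k = of_int sg * f k * x j"
        using xcs[OF jd] k by (simp add: f_def sg_def)
      show "\<forall>i\<in>set [0..<a]. i \<noteq> k \<longrightarrow> x j * f i = f i * x j"
      proof (intro ballI impI)
        fix i assume "i \<in> set [0..<a]" "i \<noteq> k"
        then have "i < a" "A!i \<noteq> j" using k assms(5) by (auto simp: a_def nth_eq_iff_index_eq)
        then show "x j * f i = f i * x j" using xco[OF jd Ad] by (simp add: f_def)
      qed
    qed
    have "x j * (H*S*C) = (x j * H) * S * C" by (simp only: mult.assoc)
    also have "\<dots> = e * H * (x (A!k') * S) * C" by (simp only: step1 mult.assoc)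
    also have "\<dots> = e * H * S * (x j * C)" by (simp only: step2 mult.assoc)
    also have "\<dots> = e * H * S * (e * C * x j)" by (simp only: step3)
    also have "\<dots> = (e * e) * H * S * C * x j"
      by (simp add: e_def mult.assoc) (metis mult.assoc mult_of_int_commute)
    also have "\<dots> = H * S * C * x j" by (simp add: ee)
    finally show ?thesis using X by simp
  qed
qed

end
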